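(* Let $f\in\omega^{\subset\omega}$, let $k,n\geq 1$, and suppose $U$ is a $(k(n-1)+1)$-branching set of extensions of $f$ with $U=\bigcup_{i<k}U_i$. Then some $U_i$ contains an $n$-branching set of extensions of $f$.
   Context: $\omega^{\subset\omega}$ is the set of partial functions from $\omega$ to $\omega$ with finite domain. For $f\in\omega^{\subset\omega}$, an $n$-branching set of extensions of $f$ of length $k$ is defined by induction on $k$: of length $1$, it is a set $U$ of $n$ functions such that for some fixed $x\notin\operatorname{dom}(f)$ each $g\in U$ satisfies $f\subseteq g$ and $\operatorname{dom}(g)=\operatorname{dom}(f)\cup\{x\}$; if $U_0$ is an $n$-branching set of extensions of $f$ of length $k$ and for each $g\in U_0$, $U_g$ is an $n$-branching set of extensions of $g$ of length $1$, then $\bigcup_{g\in U_0}U_g$ is an $n$-branching set of extensions of $f$ of length $k+1$. An $n$-branching set of extensions is one of some length $k\geq1$. *)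

theory Defs
  imports Main
begin

text \<open>Elements of omega^{subset omega}: partial maps nat \<rightharpoonup> nat with finite domain.
  Extension f \<subseteq> g is map inclusion.\<close>

definition one_step_ext :: "nat \<Rightarrow> (nat \<rightharpoonup> nat) \<Rightarrow> (nat \<rightharpoonup> nat) set \<Rightarrow> bool" where
  "one_step_ext n f U \<longleftrightarrow> finite U \<and> card U = n \<and>
     (\<exists>x. x \<notin> dom f \<and> (\<forall>g\<in>U. f \<subseteq>\<^sub>m g \<and> dom g = dom f \<union> {x}))"

inductive branch_ext :: "nat \<Rightarrow> (nat \<rightharpoonup> nat) \<Rightarrow> nat \<Rightarrow> (nat \<rightharpoonup> nat) set \<Rightarrow> bool" where
  base: "one_step_ext n f U \<Longrightarrow> branch_ext n f 1 U"
| step: "branch_ext n f k U0 \<Longrightarrow> (\<forall>g\<in>U0. one_step_ext n g (V g))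
          \<Longrightarrow> branch_ext n f (Suc k) (\<Union>g\<in>U0. V g)"

definition is_branching :: "nat \<Rightarrow> (nat \<rightharpoonup> nat) \<Rightarrow> (nat \<rightharpoonup> nat) set \<Rightarrow> bool" where
  "is_branching n f U \<longleftrightarrow> (\<exists>k\<ge>1. branch_ext n f k U)"

end

theory Submission
  imports Defs
begin

lemma pigeon:
  fixes A :: "'a set" and Us :: "nat \<Rightarrow> 'a set"
  assumes "finite A" "card A = k * (n - 1) + 1" "A \<subseteq> (\<Union>i<k. Us i)"
  shows "\<exists>i<k. \<exists>S. S \<subseteq> A \<inter> Us i \<and> card S = n"
proof (rule ccontr)
  assume H: "\<not> ?thesis"
  have le: "card (A \<inter> Us i) \<le> n - 1" if "i < k" for i
  proof (rule ccontr)
    assume "\<not> card (A \<inter> Us i) \<le> n - 1"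
    then have "n \<le> card (A \<inter> Us i)" by simp
    then obtain S where "S \<subseteq> A \<inter> Us i" "card S = n"
      by (meson obtain_subset_with_card_n)
    then show False using H that by blast
  qed
  have "A = (\<Union>i<k. A \<inter> Us i)" using assms(3) by blast
  then have "card A \<le> (\<Sum>i<k. card (A \<inter> Us i))"
    by (metis card_UN_le finite_lessThan)
  also have "\<dots> \<le> (\<Sum>i<k. n - 1)" by (rule sum_mono) (metis le lessThan_iff)
  also have "\<dots> = k * (n - 1)" by simp
  finally show False using assms(2) by simp
qed

lemma main_ind:
  assumes "branch_ext N f m U" "N = k * (n - 1) + 1"
  shows "U \<subseteq> (\<Union>i<k. Us i) \<Longrightarrow> \<exists>i<k. \<exists>W. W \<subseteq> Us i \<and> is_branching n f W"
  using assms
proof (induction arbitrary: Us rule: branch_ext.induct)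
  case (base N f U)
  have H: "finite U \<and> card U = N \<and> (\<exists>x. x \<notin> dom f \<and> (\<forall>g\<in>U. f \<subseteq>\<^sub>m g \<and> dom g = dom f \<union> {x}))"
    using base.hyps unfolding one_step_ext_def .
  then have fU12: "finite U" "card U = N" by simp_all
  from H have "\<exists>x. x \<notin> dom f \<and> (\<forall>g\<in>U. f \<subseteq>\<^sub>m g \<and> dom g = dom f \<union> {x})"
    by (rule conjunct2[THEN conjunct2])
  then obtain x where x: "x \<notin> dom f \<and> (\<forall>g\<in>U. f \<subseteq>\<^sub>m g \<and> dom g = dom f \<union> {x})"
    ..
  note fU = fU12 x
  obtain i S where "i < k" and S: "S \<subseteq> U \<inter> Us i" and cS: "card S = n"
    using pigeon[OF fU(1) _ base.prems(1)] fU(2) base.prems(2) by blast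
  have fS: "finite S" by (rule finite_subset[OF _ fU(1)]) (use S in blast)
  have "one_step_ext n f S" unfolding one_step_ext_def
    proof (intro conjI exI[of _ x])
      show "x \<notin> dom f" using x by (rule conjunct1)
      show "\<forall>g\<in>S. f \<subseteq>\<^sub>m g \<and> dom g = dom f \<union> {x}"
        using x S by (meson IntD1 subsetD)
    qed (use fS cS in simp_all)
  then have "branch_ext n f 1 S" by (rule branch_ext.base)
  then have "is_branching n f S" unfolding is_branching_def by auto
  moreover have "S \<subseteq> Us i" using S by blast
  ultimately show ?case using \<open>i < k\<close> by blast
next
  case (step N f m U0 V)
  have "\<forall>g\<in>U0. \<exists>p. fst p < k \<and> snd p \<subseteq> V g \<inter> Us (fst p) \<and> one_step_ext n g (snd p)"
  proof
    fix g assume g: "g \<in> U0"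
    have H: "finite (V g) \<and> card (V g) = N \<and> (\<exists>x. x \<notin> dom g \<and> (\<forall>h\<in>V g. g \<subseteq>\<^sub>m h \<and> dom h = dom g \<union> {x}))"
      using step.hyps(2) g unfolding one_step_ext_def by (rule bspec)
    then have fU12: "finite (V g)" "card (V g) = N" by simp_all
    from H have "\<exists>x. x \<notin> dom g \<and> (\<forall>h\<in>V g. g \<subseteq>\<^sub>m h \<and> dom h = dom g \<union> {x})"
      by (rule conjunct2[THEN conjunct2])
    then obtain x where x: "x \<notin> dom g \<and> (\<forall>h\<in>V g. g \<subseteq>\<^sub>m h \<and> dom h = dom g \<union> {x})"
      ..
    note fU = fU12 x
    have "V g \<subseteq> (\<Union>i<k. Us i)" using step.prems(1) g by blast
    then obtain i S where "i < k" and S: "S \<subseteq> V g \<inter> Us i" and cS: "card S = n"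
      using pigeon[OF fU(1)] fU(2) step.prems(2) by blast
    have fS: "finite S" by (rule finite_subset[OF _ fU(1)]) (use S in blast)
    have "one_step_ext n g S" unfolding one_step_ext_def
    proof (intro conjI exI[of _ x])
      show "x \<notin> dom g" using x by (rule conjunct1)
      show "\<forall>h\<in>S. g \<subseteq>\<^sub>m h \<and> dom h = dom g \<union> {x}"
        using x S by (meson IntD1 subsetD)
    qed (use fS cS in simp_all)
    then show "\<exists>p. fst p < k \<and> snd p \<subseteq> V g \<inter> Us (fst p) \<and> one_step_ext n g (snd p)"
      using \<open>i < k\<close> \<open>S \<subseteq> V g \<inter> Us i\<close> by (intro exI[of _ "(i, S)"]) simp
  qed
  then have "\<exists>P. \<forall>g\<in>U0. fst (P g) < k \<and> snd (P g) \<subseteq> V g \<inter> Us (fst (P g)) \<and> one_step_ext n g (snd (P g))"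
    by (rule bchoice)
  then obtain P where P: "\<forall>g\<in>U0. fst (P g) < k \<and> snd (P g) \<subseteq> V g \<inter> Us (fst (P g)) \<and> one_step_ext n g (snd (P g))"
    ..
  define c where "c g = fst (P g)" for g
  define S where "S g = snd (P g)" for g
  have cS: "\<And>g. g \<in> U0 \<Longrightarrow> c g < k \<and> S g \<subseteq> V g \<inter> Us (c g) \<and> one_step_ext n g (S g)"
    using P unfolding c_def S_def by blast
  have "U0 \<subseteq> (\<Union>i<k. {g\<in>U0. c g = i})" using cS by blast
  then obtain i W0 where i: "i < k" "W0 \<subseteq> {g\<in>U0. c g = i}" "is_branching n f W0"
    using step.IH step.prems(2) by blast
  then obtain j where j: "j \<ge> 1" "branch_ext n f j W0" unfolding is_branching_def by blast
  have "branch_ext n f (Suc j) (\<Union>g\<in>W0. S g)"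
    by (rule branch_ext.step[OF j(2)]) (use cS i(2) in blast)
  then have "is_branching n f (\<Union>g\<in>W0. S g)" unfolding is_branching_def by auto
  moreover have "(\<Union>g\<in>W0. S g) \<subseteq> Us i" using cS i(2) by blast
  ultimately show ?case using i(1) by blast
qed

theorem mainTheorem8:
  fixes f :: "nat \<rightharpoonup> nat" and k n :: nat
    and U :: "(nat \<rightharpoonup> nat) set" and Us :: "nat \<Rightarrow> (nat \<rightharpoonup> nat) set"
  assumes "finite (dom f)" and "k \<ge> 1" and "n \<ge> 1"
    and "is_branching (k * (n - 1) + 1) f U"
    and "U = (\<Union>i<k. Us i)"
  shows "\<exists>i<k. \<exists>W. W \<subseteq> Us i \<and> is_branching n f W"
proof -
  obtain m where m: "branch_ext (k * (n - 1) + 1) f m U"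
    using assms(4) unfolding is_branching_def by blast
  show ?thesis by (rule main_ind[OF m refl]) (simp add: assms(5))
qed

end
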